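(* Let $k\ge 5$ and $k<n\le k+2$. Then there is no antipodal $k$-splitting of $Q_2^n$.
   Context: $Q_2^n=\{0,1\}^n$. For $0\le m\le n$, an $m$-face of $Q_2^n$ is given by a tuple $a=(a_1,\dots,a_n)\in\{0,1,*\}^n$ with exactly $m$ entries equal to $*$; it denotes the set $\{x\in Q_2^n : x_i=a_i \text{ whenever } a_i\in\{0,1\}\}$. The direction of a face is the set of positions of its asterisks; two faces are parallel if they have the same direction, and two parallel faces $a,b$ are antipodal if $b_i=1-a_i$ at every non-asterisk position $i$. An antipodal $k$-splitting of $Q_2^n$ is a collection of exactly $2^k$ $(n-k)$-faces whose union is $Q_2^n$ and which contains no pair of parallel non-antipodal faces. *)

theory Defs
  imports Main
begin

text \<open>Vertices of Q_2^n: 0/1 lists of length n.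
 Faces: lists over {0,1,*} of length n, where None encodes * and Some b encodes b in {0,1}.\<close>

definition cube :: "nat \<Rightarrow> nat list set" where
  "cube n = {x. length x = n \<and> set x \<subseteq> {0, 1}}"

definition is_face :: "nat \<Rightarrow> nat \<Rightarrow> nat option list \<Rightarrow> bool" where
  "is_face n m a \<longleftrightarrow> length a = n \<and> (\<forall>i<n. a ! i \<in> {None, Some 0, Some 1})
     \<and> card {i. i < n \<and> a ! i = None} = m"

definition face_set :: "nat option list \<Rightarrow> nat list set" where
  "face_set a = {x \<in> cube (length a). \<forall>i<length a. \<forall>b. a ! i = Some b \<longrightarrow> x ! i = b}"

definition direction :: "nat option list \<Rightarrow> nat set" where
  "direction a = {i. i < length a \<and> a ! i = None}"

definition parallel :: "nat option list \<Rightarrow> nat option list \<Rightarrow> bool" where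
  "parallel a b \<longleftrightarrow> length a = length b \<and> direction a = direction b"

definition antipodal :: "nat option list \<Rightarrow> nat option list \<Rightarrow> bool" where
  "antipodal a b \<longleftrightarrow> parallel a b \<and>
     (\<forall>i<length a. \<forall>c. a ! i = Some c \<longrightarrow> b ! i = Some (1 - c))"

definition antipodal_splitting :: "nat \<Rightarrow> nat \<Rightarrow> nat option list set \<Rightarrow> bool" where
  "antipodal_splitting n k S \<longleftrightarrow>
     finite S \<and> card S = 2 ^ k \<and> (\<forall>a\<in>S. is_face n (n - k) a) \<and>
     (\<Union>a\<in>S. face_set a) = cube n \<and>
     (\<forall>a\<in>S. \<forall>b\<in>S. parallel a b \<longrightarrow> a = b \<or> antipodal a b)"

end

theory Submission
  imports Defs
begin

fun chi :: "bool list \<Rightarrow> nat list \<Rightarrow> int" where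
  "chi (m#ms) (x#xs) = (if m \<and> x = 1 then -1 else 1) * chi ms xs"
| "chi _ _ = 1"

fun fchi :: "bool list \<Rightarrow> nat option list \<Rightarrow> int" where
  "fchi (m#ms) (a#as) = (if m \<and> a = Some 1 then -1 else 1) * fchi ms as"
| "fchi _ _ = 1"

fun clash :: "bool list \<Rightarrow> nat option list \<Rightarrow> bool" where
  "clash (m#ms) (a#as) = ((m \<and> a = None) \<or> clash ms as)"
| "clash _ _ = False"

definition nnone :: "nat option list \<Rightarrow> nat" where
  "nnone a = length (filter (\<lambda>c. c = None) a)"

lemma face_set_Nil: "face_set [] = {[]}"
  by (auto simp: face_set_def cube_def)

lemma mem_face_Cons: "x \<in> face_set (c # a) \<longleftrightarrow>
  (\<exists>y ys. x = y # ys \<and> y \<in> {0,1} \<and> (\<forall>b. c = Some b \<longrightarrow> y = b) \<and> ys \<in> face_set a)"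
  apply (cases x)
   apply (auto simp: face_set_def cube_def All_less_Suc2)
  done

lemma face_Some: "face_set (Some b # a) = (if b \<in> {0,1} then Cons b ` face_set a else {})"
  by (auto simp: mem_face_Cons)

lemma face_None: "face_set (None # a) = Cons 0 ` face_set a \<union> Cons 1 ` face_set a"
  by (auto simp: mem_face_Cons)

lemma finite_face: "finite (face_set a)"
proof (induction a)
  case Nil then show ?case by (simp add: face_set_Nil)
next
  case (Cons c a) then show ?case
    by (cases c) (auto simp: face_Some face_None)
qed

lemma nnone_Cons: "nnone (c # a) = (if c = None then Suc (nnone a) else nnone a)"
  by (simp add: nnone_def)

lemma fourier_face:
  assumes "set a \<subseteq> {None, Some 0, Some 1}" "length ms = length a"
  shows "(\<Sum>x\<in>face_set a. chi ms x) = (if clash ms a then 0 else 2 ^ nnone a * fchi ms a)"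
  using assms
proof (induction a arbitrary: ms)
  case Nil then show ?case by (simp add: face_set_Nil nnone_def)
next
  case (Cons c a)
  then obtain m ms' where ms: "ms = m # ms'" "length ms' = length a" by (cases ms) auto
  have IH: "(\<Sum>x\<in>face_set a. chi ms' x) = (if clash ms' a then 0 else 2 ^ nnone a * fchi ms' a)"
    using Cons ms by auto
  have c: "c = None \<or> c = Some 0 \<or> c = Some 1" using Cons.prems by auto
  show ?case
  proof (cases "c = None")
    case True
    have d: "Cons 0 ` face_set a \<inter> Cons 1 ` face_set a = {}" by auto
    have "(\<Sum>x\<in>face_set (c#a). chi ms x) = (\<Sum>x\<in>Cons 0 ` face_set a. chi ms x) + (\<Sum>x\<in>Cons 1 ` face_set a. chi ms x)"
      unfolding True face_None by (rule sum.union_disjoint) (auto simp: finite_face)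
    also have "\<dots> = (\<Sum>x\<in>face_set a. chi ms (0#x)) + (\<Sum>x\<in>face_set a. chi ms (1#x))"
      by (simp add: sum.reindex)
    also have "\<dots> = (if m then 0 else 2 * (\<Sum>x\<in>face_set a. chi ms' x))"
      by (simp add: ms sum_distrib_left[symmetric])
    finally show ?thesis using True IH by (simp add: ms nnone_Cons)
  next
    case False
    then obtain b where b: "c = Some b" "b \<in> {0,1}" using c by auto
    have "(\<Sum>x\<in>face_set (c#a). chi ms x) = (\<Sum>x\<in>face_set a. chi ms (b#x))"
      using b by (simp add: face_Some sum.reindex)
    also have "\<dots> = (if m \<and> b = 1 then -1 else 1) * (\<Sum>x\<in>face_set a. chi ms' x)"
      by (simp add: ms sum_distrib_left)
    finally show ?thesis using b IH by (simp add: ms nnone_Cons)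
  qed
qed

lemma chi_False: "chi (replicate n False) x = 1"
  by (induction n arbitrary: x) (auto, case_tac x, auto)

lemma clash_False: "\<not> clash (replicate n False) a"
  by (induction n arbitrary: a) (auto elim: clash.elims)

lemma fchi_False: "fchi (replicate n False) a = 1"
  by (induction n arbitrary: a) (auto, case_tac a, auto)

lemma card_face:
  assumes "set a \<subseteq> {None, Some 0, Some 1}"
  shows "int (card (face_set a)) = 2 ^ nnone a"
  using fourier_face[OF assms, of "replicate (length a) False"]
  by (simp add: chi_False clash_False fchi_False)

lemma valid_None: "set (replicate n None) \<subseteq> {None, Some 0, Some 1}"
  by auto

lemma cube_face: "cube n = face_set (replicate n None)"
  by (auto simp: face_set_def)

lemma clash_None: "length ms = n \<Longrightarrow> clash ms (replicate n None) \<longleftrightarrow> True \<in> set ms"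
  by (induction ms arbitrary: n) auto

lemma fourier_cube:
  assumes "length ms = n" "True \<in> set ms"
  shows "(\<Sum>x\<in>cube n. chi ms x) = 0"
  using fourier_face[OF valid_None, of ms n] assms by (simp add: cube_face clash_None)

lemma card_cube: "card (cube n) = 2 ^ n"
proof -
  have "int (card (cube n)) = 2 ^ n"
    using card_face[OF valid_None[of n]] by (simp add: cube_face nnone_def)
  then have "int (card (cube n)) = int (2 ^ n)" by simp
  then show ?thesis by (simp only: of_nat_eq_iff)
qed

lemma clash_iff: "length ms = length a \<Longrightarrow> clash ms a \<longleftrightarrow> (\<exists>i<length a. ms!i \<and> a!i = None)"
proof (induction a arbitrary: ms)
  case Nil then show ?case by (cases ms) auto
next
  case (Cons c a) then show ?case by (cases ms) (auto simp: Ex_less_Suc2)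
qed

lemma fchi_antip:
  assumes "length ms = length a" "length b = length a" "set a \<subseteq> {None, Some 0, Some 1}"
    "\<forall>i<length a. (a!i = None \<longrightarrow> b!i = None) \<and> (\<forall>c. a!i = Some c \<longrightarrow> b!i = Some (1-c))"
    "\<not> clash ms a"
  shows "fchi ms b = (-1) ^ (length (filter (\<lambda>x. x) ms)) * fchi ms a"
  using assms
proof (induction a arbitrary: ms b)
  case Nil then show ?case by simp
next
  case (Cons c a)
  obtain m ms' where ms: "ms = m # ms'" using Cons.prems by (cases ms) auto
  obtain d b' where b: "b = d # b'" using Cons.prems by (cases b) auto
  have h0: "(c = None \<longrightarrow> d = None) \<and> (\<forall>e. c = Some e \<longrightarrow> d = Some (1-e))"
    using Cons.prems(4) b by (simp add: All_less_Suc2)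
  have h1: "\<forall>i<length a. (a!i = None \<longrightarrow> b'!i = None) \<and> (\<forall>c. a!i = Some c \<longrightarrow> b'!i = Some (1-c))"
    using Cons.prems(4) b by (simp add: All_less_Suc2)
  have IH: "fchi ms' b' = (-1) ^ (length (filter (\<lambda>x. x) ms')) * fchi ms' a"
    using Cons.IH[of ms' b'] Cons.prems(1,2,3,5) ms b h1 by simp
  have c: "c = None \<or> c = Some 0 \<or> c = Some 1" using Cons.prems by auto
  show ?case using c h0 IH Cons.prems(5) by (auto simp: ms b)
qed

definition P7 :: "(nat \<times> nat) set" where "P7 = Sigma {..<7} (\<lambda>j. {..<j})"

lemma sum_P7: "(\<Sum>p\<in>P7. f p) = (\<Sum>j<7. \<Sum>i<j. f (j, i))"
  unfolding P7_def by (simp add: sum.Sigma)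

lemma bool6:
  fixes b1 b2 b3 b4 b5 b6 :: bool
  shows "of_bool b1 + of_bool b2 + of_bool b3 + of_bool b4 + of_bool b5 + of_bool b6 +
     (of_bool (b1 \<noteq> b2) + of_bool (b1 \<noteq> b3) + of_bool (b1 \<noteq> b4) + of_bool (b1 \<noteq> b5) +
      of_bool (b1 \<noteq> b6) + of_bool (b2 \<noteq> b3) + of_bool (b2 \<noteq> b4) + of_bool (b2 \<noteq> b5) +
      of_bool (b2 \<noteq> b6) + of_bool (b3 \<noteq> b4) + of_bool (b3 \<noteq> b5) + of_bool (b3 \<noteq> b6) +
      of_bool (b4 \<noteq> b5) + of_bool (b4 \<noteq> b6) + of_bool (b5 \<noteq> b6)) \<noteq> (16::nat)"
  by (cases b1; cases b2; cases b3; cases b4; cases b5; cases b6; simp)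

lemma final_arith:
  fixes c :: "nat \<Rightarrow> nat \<Rightarrow> nat"
  assumes h0: "\<And>j. 1 \<le> j \<Longrightarrow> j < 7 \<Longrightarrow> c 0 j = 0 \<or> c 0 j = 2"
    and h1: "\<And>j l. 1 \<le> j \<Longrightarrow> j < l \<Longrightarrow> l < 7 \<Longrightarrow> c j l = (if (c 0 j = 0) = (c 0 l = 0) then 0 else 2)"
    and hs: "(\<Sum>p\<in>P7. c (snd p) (fst p)) = 32"
  shows False
proof -
  define b where "b j = (c 0 j \<noteq> 0)" for j
  have c0: "c 0 j = 2 * of_bool (b j)" if "1 \<le> j" "j < 7" for j
    using h0[OF that] by (auto simp: b_def)
  have c1: "c j l = 2 * of_bool (b j \<noteq> b l)" if "1 \<le> j" "j < l" "l < 7" for j l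
    using h1[OF that] by (auto simp: b_def)
  have "(\<Sum>p\<in>P7. c (snd p) (fst p)) = c 0 1 + c 0 2 + c 0 3 + c 0 4 + c 0 5 + c 0 6 +
    (c 1 2 + c 1 3 + c 1 4 + c 1 5 + c 1 6 + c 2 3 + c 2 4 + c 2 5 + c 2 6 + c 3 4 + c 3 5 + c 3 6
     + c 4 5 + c 4 6 + c 5 6)"
    unfolding sum_P7 by (simp add: eval_nat_numeral)
  also have "\<dots> = 2 * (of_bool (b 1) + of_bool (b 2) + of_bool (b 3) + of_bool (b 4) + of_bool (b 5) + of_bool (b 6) +
     (of_bool (b 1 \<noteq> b 2) + of_bool (b 1 \<noteq> b 3) + of_bool (b 1 \<noteq> b 4) + of_bool (b 1 \<noteq> b 5) +
      of_bool (b 1 \<noteq> b 6) + of_bool (b 2 \<noteq> b 3) + of_bool (b 2 \<noteq> b 4) + of_bool (b 2 \<noteq> b 5) +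
      of_bool (b 2 \<noteq> b 6) + of_bool (b 3 \<noteq> b 4) + of_bool (b 3 \<noteq> b 5) + of_bool (b 3 \<noteq> b 6) +
      of_bool (b 4 \<noteq> b 5) + of_bool (b 4 \<noteq> b 6) + of_bool (b 5 \<noteq> b 6)))"
    by (simp only: c0 c1 one_le_numeral le_numeral_extra numeral_less_iff semiring_norm
        order_refl zero_less_numeral simp_thms) simp
  finally have "2 * E = 32" if "E = of_bool (b 1) + of_bool (b 2) + of_bool (b 3) + of_bool (b 4) + of_bool (b 5) + of_bool (b 6) +
     (of_bool (b 1 \<noteq> b 2) + of_bool (b 1 \<noteq> b 3) + of_bool (b 1 \<noteq> b 4) + of_bool (b 1 \<noteq> b 5) +
      of_bool (b 1 \<noteq> b 6) + of_bool (b 2 \<noteq> b 3) + of_bool (b 2 \<noteq> b 4) + of_bool (b 2 \<noteq> b 5) +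
      of_bool (b 2 \<noteq> b 6) + of_bool (b 3 \<noteq> b 4) + of_bool (b 3 \<noteq> b 5) + of_bool (b 3 \<noteq> b 6) +
      of_bool (b 4 \<noteq> b 5) + of_bool (b 4 \<noteq> b 6) + of_bool (b 5 \<noteq> b 6))" for E :: nat
    using hs that by simp
  then show False using bool6[of "b 1" "b 2" "b 3" "b 4" "b 5" "b 6"] by fastforce
qed

lemma face_props:
  assumes "is_face n m a"
  shows "length a = n" "set a \<subseteq> {None, Some 0, Some 1}" "card (direction a) = m" "nnone a = m"
proof -
  show l: "length a = n" using assms by (simp add: is_face_def)
  show "set a \<subseteq> {None, Some 0, Some 1}"
  proof
    fix x assume "x \<in> set a"
    then obtain i where "i < length a" "a!i = x" by (auto simp: in_set_conv_nth)
    moreover have h: "\<forall>i<n. a!i \<in> {None, Some 0, Some 1}" using assms unfolding is_face_def by simp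
    ultimately show "x \<in> {None, Some 0, Some 1}" using h[rule_format, of i] l by simp
  qed
  show "card (direction a) = m" using assms l by (simp add: is_face_def direction_def)
  then show "nnone a = m" by (simp add: nnone_def length_filter_conv_card direction_def)
qed

lemma antip_pt:
  assumes "antipodal a b"
  shows "length b = length a \<and> (\<forall>i<length a. (a!i = None \<longrightarrow> b!i = None) \<and> (\<forall>c. a!i = Some c \<longrightarrow> b!i = Some (1-c)))"
proof -
  have l: "length b = length a" and d: "direction a = direction b"
    using assms by (auto simp: antipodal_def parallel_def)
  have "b!i = None" if "i < length a" "a!i = None" for i
  proof -
    have "i \<in> direction a" using that by (simp add: direction_def)
    then have "i \<in> direction b" using d by simp
    then show ?thesis by (simp add: direction_def)
  qed
  then show ?thesis using l assms by (auto simp: antipodal_def)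
qed

lemma antip_unique:
  assumes "antipodal a b" "antipodal a c"
  shows "b = c"
proof -
  note B = antip_pt[OF assms(1)] and C = antip_pt[OF assms(2)]
  show ?thesis
  proof (rule nth_equalityI)
    show "length b = length c" using B C by simp
    fix i assume "i < length b"
    then have i: "i < length a" using B by simp
    show "b!i = c!i"
    proof (cases "a!i")
      case None then show ?thesis using B C i by simp
    next
      case (Some e) then show ?thesis using B C i by simp
    qed
  qed
qed

lemma fiber_le2:
  assumes "finite A" "\<forall>a\<in>A. \<forall>b\<in>A. a = b \<or> antipodal a b"
  shows "card A \<le> 2"
proof (cases "A = {}")
  case True then show ?thesis by simp
next
  case False
  then obtain a where a: "a \<in> A" by auto
  define A' where "A' = {b\<in>A. antipodal a b}"
  have "finite A'" using assms(1) by (simp add: A'_def)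
  have "card A' \<le> Suc 0" using \<open>finite A'\<close>
    by (auto simp: card_le_Suc0_iff_eq A'_def intro: antip_unique)
  have "A \<subseteq> insert a A'" using assms(2) a by (auto simp: A'_def)
  then have "card A \<le> card (insert a A')" using \<open>finite A'\<close> by (intro card_mono) auto
  also have "\<dots> \<le> Suc (card A')" by (simp add: card_insert_if \<open>finite A'\<close>)
  finally show ?thesis using \<open>card A' \<le> Suc 0\<close> by simp
qed

lemma fiber_splitting:
  assumes "antipodal_splitting n k S"
  shows "card {F\<in>S. direction F = D} \<le> 2"
proof (rule fiber_le2)
  show "finite {F\<in>S. direction F = D}" using assms by (simp add: antipodal_splitting_def)
  show "\<forall>a\<in>{F\<in>S. direction F = D}. \<forall>b\<in>{F\<in>S. direction F = D}. a = b \<or> antipodal a b"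
  proof (intro ballI)
    fix a b assume a: "a \<in> {F\<in>S. direction F = D}" and b: "b \<in> {F\<in>S. direction F = D}"
    have "length a = n" "length b = n" using a b assms face_props(1)
      by (auto simp: antipodal_splitting_def)
    then have "parallel a b" using a b by (simp add: parallel_def)
    then show "a = b \<or> antipodal a b" using a b assms by (auto simp: antipodal_splitting_def)
  qed
qed

lemma count_bound:
  assumes "antipodal_splitting n k S"
  shows "card S \<le> 2 * (n choose (n-k))"
proof -
  have fin: "finite S" using assms by (simp add: antipodal_splitting_def)
  have "card S = (\<Sum>x\<in>S. 1)" by simp
  also have "\<dots> = (\<Sum>D\<in>direction ` S. (\<Sum>x\<in>{F\<in>S. direction F = D}. 1))"
    by (rule sum.image_gen[OF fin])
  also have "\<dots> = (\<Sum>D\<in>direction ` S. card {F\<in>S. direction F = D})" by simp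
  also have "\<dots> \<le> (\<Sum>D\<in>direction ` S. 2)"
    by (intro sum_mono fiber_splitting[OF assms])
  also have "\<dots> = 2 * card (direction ` S)" by simp
  also have "card (direction ` S) \<le> card {D. D \<subseteq> {..<n} \<and> card D = n - k}"
  proof (rule card_mono)
    show "finite {D. D \<subseteq> {..<n} \<and> card D = n - k}" by simp
    show "direction ` S \<subseteq> {D. D \<subseteq> {..<n} \<and> card D = n - k}"
    proof
      fix D assume "D \<in> direction ` S"
      then obtain F where F: "F \<in> S" "D = direction F" by auto
      have f: "is_face n (n-k) F" using assms F by (simp add: antipodal_splitting_def)
      show "D \<in> {D. D \<subseteq> {..<n} \<and> card D = n - k}"
        using face_props[OF f] F by (auto simp: direction_def)
    qed
  qed
  also have "card {D. D \<subseteq> {..<n} \<and> card D = n - k} = n choose (n-k)"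
    using n_subsets[of "{..<n}" "n-k"] by simp
  finally show ?thesis by simp
qed

lemma fchi_pm: "fchi ms a = 1 \<or> fchi ms a = -1"
  by (induction ms a rule: fchi.induct) auto

lemma case75:
  assumes spl: "antipodal_splitting 7 5 S"
  shows False
proof -
  have fin: "finite S" and cardS: "card S = 32" and faces: "\<And>F. F \<in> S \<Longrightarrow> is_face 7 2 F"
    and cover: "(\<Union>F\<in>S. face_set F) = cube 7"
    and anti: "\<And>a b. a \<in> S \<Longrightarrow> b \<in> S \<Longrightarrow> parallel a b \<Longrightarrow> a = b \<or> antipodal a b"
    using spl by (auto simp: antipodal_splitting_def)
  have len: "\<And>F. F \<in> S \<Longrightarrow> length F = 7" using faces face_props by blast
  have valid: "\<And>F. F \<in> S \<Longrightarrow> set F \<subseteq> {None, Some 0, Some 1}" using faces face_props by blast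
  have dir2: "\<And>F. F \<in> S \<Longrightarrow> card (direction F) = 2" using faces face_props by blast
  have nn: "\<And>F. F \<in> S \<Longrightarrow> nnone F = 2" using faces face_props by blast
  have dsub: "\<And>F. F \<in> S \<Longrightarrow> direction F \<subseteq> {..<7}" using len by (auto simp: direction_def)
  have sub: "\<And>F. F \<in> S \<Longrightarrow> face_set F \<subseteq> cube 7" using len by (auto simp: face_set_def)
  have fincube: "finite (cube 7)" by (simp add: cube_face finite_face)
  define cnt where "cnt x = (\<Sum>F\<in>S. if x \<in> face_set F then 1 else 0 :: int)" for x
  have cardcube: "card (cube 7) = 128" by (simp add: card_cube)
  have tot: "(\<Sum>x\<in>cube 7. cnt x) = 128"
  proof -
    have "(\<Sum>x\<in>cube 7. cnt x) = (\<Sum>F\<in>S. \<Sum>x\<in>cube 7. if x \<in> face_set F then 1 else 0 :: int)"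
      unfolding cnt_def by (rule sum.swap)
    also have "\<dots> = (\<Sum>F\<in>S. 4)"
    proof (rule sum.cong)
      fix F assume F: "F \<in> S"
      have "(\<Sum>x\<in>cube 7. if x \<in> face_set F then 1 else 0 :: int) = (\<Sum>x\<in>cube 7 \<inter> face_set F. 1)"
        by (rule sum.inter_restrict[symmetric, OF fincube])
      also have "cube 7 \<inter> face_set F = face_set F" using sub[OF F] by blast
      also have "(\<Sum>x\<in>face_set F. 1::int) = int (card (face_set F))" by simp
      also have "\<dots> = 4" using card_face[OF valid[OF F]] nn[OF F] by simp
      finally show "(\<Sum>x\<in>cube 7. if x \<in> face_set F then 1 else 0 :: int) = 4" .
    qed simp
    also have "\<dots> = 128" using cardS by simp
    finally show ?thesis .
  qed
  have ge1: "cnt x \<ge> 1" if x: "x \<in> cube 7" for x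
  proof -
    obtain F where F: "F \<in> S" "x \<in> face_set F" using x cover by blast
    have "(if x \<in> face_set F then 1 else 0 :: int) \<le> cnt x"
      unfolding cnt_def by (rule member_le_sum[OF F(1) _ fin]) simp
    then show ?thesis using F by simp
  qed
  have eq1: "cnt x = 1" if x: "x \<in> cube 7" for x
  proof -
    have "(\<Sum>x\<in>cube 7. cnt x - 1) = 0"
      using tot cardcube by (simp add: sum_subtractf)
    moreover have "\<And>x. x \<in> cube 7 \<Longrightarrow> 0 \<le> cnt x - 1" using ge1 by force
    ultimately have "\<forall>x\<in>cube 7. cnt x - 1 = 0"
      using sum_nonneg_eq_0_iff[OF fincube, of "\<lambda>x. cnt x - 1"] by blast
    then show ?thesis using x by simp
  qed
  have four: "(\<Sum>F\<in>S. if clash ms F then 0 else 4 * fchi ms F) = 0"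
    if ms: "length ms = 7" "True \<in> set ms" for ms
  proof -
    have "(\<Sum>F\<in>S. if clash ms F then 0 else 4 * fchi ms F) = (\<Sum>F\<in>S. \<Sum>x\<in>face_set F. chi ms x)"
    proof (rule sum.cong)
      fix F assume F: "F \<in> S"
      show "(if clash ms F then 0 else 4 * fchi ms F) = (\<Sum>x\<in>face_set F. chi ms x)"
        using fourier_face[OF valid[OF F], of ms] ms len[OF F] nn[OF F] by simp
    qed simp
    also have "\<dots> = (\<Sum>F\<in>S. \<Sum>x\<in>cube 7. if x \<in> face_set F then chi ms x else 0)"
    proof (rule sum.cong)
      fix F assume F: "F \<in> S"
      have "(\<Sum>x\<in>cube 7. if x \<in> face_set F then chi ms x else 0) = (\<Sum>x\<in>cube 7 \<inter> face_set F. chi ms x)"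
        by (rule sum.inter_restrict[symmetric, OF fincube])
      also have "cube 7 \<inter> face_set F = face_set F" using sub[OF F] by blast
      finally show "(\<Sum>x\<in>face_set F. chi ms x) = (\<Sum>x\<in>cube 7. if x \<in> face_set F then chi ms x else 0)" by simp
    qed simp
    also have "\<dots> = (\<Sum>x\<in>cube 7. \<Sum>F\<in>S. if x \<in> face_set F then chi ms x else 0)"
      by (rule sum.swap)
    also have "\<dots> = (\<Sum>x\<in>cube 7. chi ms x * cnt x)"
      unfolding cnt_def sum_distrib_left by (intro sum.cong) auto
    also have "\<dots> = (\<Sum>x\<in>cube 7. chi ms x)"
      by (intro sum.cong) (auto simp: eq1)
    also have "\<dots> = 0" by (rule fourier_cube[OF ms])
    finally show ?thesis .
  qed
  define mask where "mask U = map (\<lambda>t. t \<notin> U) [0..<7]" for U :: "nat set"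
  have lmask: "length (mask U) = 7" for U by (simp add: mask_def)
  have clash_mask: "clash (mask U) F \<longleftrightarrow> \<not> direction F \<subseteq> U" if F: "F \<in> S" for U F
    using clash_iff[of "mask U" F] len[OF F] by (auto simp: mask_def direction_def)
  have fourU: "(\<Sum>F\<in>{F\<in>S. direction F \<subseteq> U}. fchi (mask U) F) = 0"
    if U: "U \<subseteq> {..<7}" "card U \<le> 3" for U
  proof -
    have "\<not> {..<7} \<subseteq> U"
    proof
      assume "{..<7} \<subseteq> U"
      then have "card {..<7::nat} \<le> card U" using U by (intro card_mono) (auto intro: finite_subset)
      then show False using U by simp
    qed
    then obtain t where t: "t < 7" "t \<notin> U" by auto
    have "True \<in> set (mask U)" using t by (auto simp: mask_def)
    then have "(\<Sum>F\<in>S. if clash (mask U) F then 0 else 4 * fchi (mask U) F) = 0"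
      using four lmask by blast
    also have "(\<Sum>F\<in>S. if clash (mask U) F then 0 else 4 * fchi (mask U) F)
       = (\<Sum>F\<in>S. if direction F \<subseteq> U then 4 * fchi (mask U) F else 0)"
      by (intro sum.cong) (auto simp: clash_mask)
    also have "\<dots> = (\<Sum>F\<in>{F\<in>S. direction F \<subseteq> U}. 4 * fchi (mask U) F)"
      by (rule sum.inter_filter[symmetric, OF fin])
    also have "\<dots> = 4 * (\<Sum>F\<in>{F\<in>S. direction F \<subseteq> U}. fchi (mask U) F)"
      by (simp add: sum_distrib_left)
    finally show ?thesis by simp
  qed
  define SD where "SD D = {F\<in>S. direction F = D}" for D
  have finSD: "finite (SD D)" for D using fin by (simp add: SD_def)
  have SD_le2: "card (SD D) \<le> 2" for D unfolding SD_def by (rule fiber_splitting[OF spl])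
  have pair: "SD {i,j} = {} \<or> (\<exists>F F'. SD {i,j} = {F,F'} \<and> F \<noteq> F' \<and> antipodal F F')"
    if ij: "i < 7" "j < 7" "i \<noteq> j" for i j
  proof -
    have e: "{F\<in>S. direction F \<subseteq> {i,j}} = SD {i,j}"
    proof -
      have "direction F = {i,j}" if "F \<in> S" "direction F \<subseteq> {i,j}" for F
        using card_subset_eq[of "{i,j}" "direction F"] that dir2 ij by auto
      then show ?thesis unfolding SD_def by auto
    qed
    have s0: "(\<Sum>F\<in>SD {i,j}. fchi (mask {i,j}) F) = 0"
      using fourU[of "{i,j}"] ij e by (simp add: card_insert_if)
    have "card (SD {i,j}) = 0 \<or> card (SD {i,j}) = 1 \<or> card (SD {i,j}) = 2"
      using SD_le2[of "{i,j}"] by linarith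
    then show ?thesis
    proof (elim disjE)
      assume "card (SD {i,j}) = 0" then show ?thesis using finSD by simp
    next
      assume "card (SD {i,j}) = 1"
      then obtain F where "SD {i,j} = {F}" by (rule card_1_singletonE)
      then show ?thesis using s0 fchi_pm[of "mask {i,j}" F] by auto
    next
      assume "card (SD {i,j}) = 2"
      then obtain F F' where FF: "SD {i,j} = {F,F'}" "F \<noteq> F'" by (auto simp: card_2_iff)
      then have "F \<in> S" "F' \<in> S" "direction F = direction F'" by (auto simp: SD_def)
      then have "parallel F F'" using len by (simp add: parallel_def)
      then have "antipodal F F'" using anti \<open>F \<in> S\<close> \<open>F' \<in> S\<close> FF(2) by blast
      then show ?thesis using FF by blast
    qed
  qed
  have c02: "card (SD {i,j}) = (if SD {i,j} = {} then 0 else 2)"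
    if ij: "i < 7" "j < 7" "i \<noteq> j" for i j
    using pair[OF ij] by auto
  have cnt_mask: "length (filter (\<lambda>x. x) (mask U)) = 4" if U: "U \<subseteq> {..<7}" "card U = 3" for U
  proof -
    have "length (filter (\<lambda>x. x) (mask U)) = length (filter (\<lambda>t. t \<notin> U) [0..<7])"
      by (simp add: mask_def filter_map comp_def)
    also have "\<dots> = card (set (filter (\<lambda>t. t \<notin> U) [0..<7]))"
      by (rule distinct_card[symmetric]) simp
    also have "set (filter (\<lambda>t. t \<notin> U) [0..<7]) = {..<7} - U" by auto
    also have "card ({..<7} - U) = 4" using U by (simp add: card_Diff_subset finite_subset)
    finally show ?thesis .
  qed
  have vpair: "(SD {a,b} = {} \<and> (\<Sum>F\<in>SD {a,b}. fchi (mask U) F) = 0) \<or>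
      (SD {a,b} \<noteq> {} \<and> ((\<Sum>F\<in>SD {a,b}. fchi (mask U) F) = 2 \<or> (\<Sum>F\<in>SD {a,b}. fchi (mask U) F) = -2))"
    if ab: "a < 7" "b < 7" "a \<noteq> b" and U: "{a,b} \<subseteq> U" "U \<subseteq> {..<7}" "card U = 3" for a b U
  proof -
    from pair[OF ab] show ?thesis
    proof (elim disjE exE conjE)
      assume "SD {a,b} = {}" then show ?thesis by simp
    next
      fix F F' assume FF: "SD {a, b} = {F, F'}" "F \<noteq> F'" "antipodal F F'"
      have F: "F \<in> S" "direction F = {a,b}" using FF by (auto simp: SD_def)
      have nc: "\<not> clash (mask U) F" using clash_mask[OF F(1)] F U by simp
      have ap: "length F' = length F" and ap2: "\<forall>i<length F. (F!i = None \<longrightarrow> F'!i = None) \<and> (\<forall>c. F!i = Some c \<longrightarrow> F'!i = Some (1-c))"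
        using antip_pt[OF FF(3)] by auto
      have "fchi (mask U) F' = (-1) ^ (length (filter (\<lambda>x. x) (mask U))) * fchi (mask U) F"
        by (rule fchi_antip[OF _ ap valid[OF F(1)] ap2 nc]) (simp add: lmask len[OF F(1)])
      then have e: "fchi (mask U) F' = fchi (mask U) F" using cnt_mask[OF U(2,3)] by simp
      have "(\<Sum>F\<in>SD {a,b}. fchi (mask U) F) = 2 * fchi (mask U) F" using FF(1,2) e by simp
      then show ?thesis using fchi_pm[of "mask U" F] FF(1) by auto
    qed
  qed
  have trip: "card (SD {j,l}) = (if (card (SD {0,j}) = 0) = (card (SD {0,l}) = 0) then 0 else 2)"
    if jl: "1 \<le> j" "j < l" "l < 7" for j l
  proof -
    define U where "U = {0,j,l}"
    have U: "U \<subseteq> {..<7}" "card U = 3" using jl by (auto simp: U_def)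
    have split: "{F\<in>S. direction F \<subseteq> U} = SD {0,j} \<union> SD {0,l} \<union> SD {j,l}"
    proof
      show "SD {0,j} \<union> SD {0,l} \<union> SD {j,l} \<subseteq> {F\<in>S. direction F \<subseteq> U}"
        by (auto simp: SD_def U_def)
      show "{F\<in>S. direction F \<subseteq> U} \<subseteq> SD {0,j} \<union> SD {0,l} \<union> SD {j,l}"
      proof
        fix F assume F: "F \<in> {F\<in>S. direction F \<subseteq> U}"
        have "\<exists>x y. direction F = {x,y} \<and> x \<noteq> y" using dir2[of F] F by (simp add: card_2_iff)
        then obtain x y where xy: "direction F = {x,y}" "x \<noteq> y" by blast
        have "x \<in> U" "y \<in> U" using F xy by auto
        then have "{x,y} = {0,j} \<or> {x,y} = {0,l} \<or> {x,y} = {j,l}" using xy(2) by (auto simp: U_def)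
        then show "F \<in> SD {0,j} \<union> SD {0,l} \<union> SD {j,l}" using F xy(1) by (auto simp: SD_def)
      qed
    qed
    have d1: "SD {0,j} \<inter> SD {0,l} = {}" "(SD {0,j} \<union> SD {0,l}) \<inter> SD {j,l} = {}"
      using jl by (auto simp: SD_def doubleton_eq_iff)
    let ?v = "\<lambda>D. \<Sum>F\<in>SD D. fchi (mask U) F"
    have "?v {0,j} + ?v {0,l} + ?v {j,l} = 0"
    proof -
      have "0 = (\<Sum>F\<in>{F\<in>S. direction F \<subseteq> U}. fchi (mask U) F)" using fourU[OF U(1)] U(2) by simp
      also have "\<dots> = ?v {0,j} + ?v {0,l} + ?v {j,l}"
        unfolding split by (simp add: sum.union_disjoint[OF _ _ d1(2)] sum.union_disjoint[OF _ _ d1(1)] finSD)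
      finally show ?thesis by simp
    qed
    moreover note vpair[of 0 j U] vpair[of 0 l U] vpair[of j l U]
    moreover note c02[of 0 j] c02[of 0 l] c02[of j l]
    ultimately show ?thesis using jl U by (auto simp: U_def)
  qed
  have UN: "S = (\<Union>p\<in>P7. SD {snd p, fst p})"
  proof
    show "(\<Union>p\<in>P7. SD {snd p, fst p}) \<subseteq> S" by (auto simp: SD_def)
    show "S \<subseteq> (\<Union>p\<in>P7. SD {snd p, fst p})"
    proof
      fix F assume F: "F \<in> S"
      have "\<exists>x y. direction F = {x,y} \<and> x \<noteq> y" using dir2[of F] F by (simp add: card_2_iff)
      then obtain x y where xy: "direction F = {x,y}" "x \<noteq> y" by blast
      have "x < 7" "y < 7" using dsub[OF F] xy by auto
      show "F \<in> (\<Union>p\<in>P7. SD {snd p, fst p})"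
      proof (cases "x < y")
        case True
        then have "(y,x) \<in> P7" using \<open>y < 7\<close> by (simp add: P7_def)
        moreover have "F \<in> SD {snd (y,x), fst (y,x)}" using F xy by (simp add: SD_def)
        ultimately show ?thesis by (rule UN_I)
      next
        case False
        then have "(x,y) \<in> P7" using \<open>x < 7\<close> xy(2) by (simp add: P7_def)
        moreover have "F \<in> SD {snd (x,y), fst (x,y)}" using F xy by (simp add: SD_def insert_commute)
        ultimately show ?thesis by (rule UN_I)
      qed
    qed
  qed
  have sumS: "card S = (\<Sum>p\<in>P7. card (SD {snd p, fst p}))"
  proof -
    have "card (\<Union>p\<in>P7. SD {snd p, fst p}) = (\<Sum>p\<in>P7. card (SD {snd p, fst p}))"
    proof (rule card_UN_disjoint)
      show "finite P7" by (simp add: P7_def)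
      show "\<forall>p\<in>P7. finite (SD {snd p, fst p})" using finSD by simp
      show "\<forall>p\<in>P7. \<forall>q\<in>P7. p \<noteq> q \<longrightarrow> SD {snd p, fst p} \<inter> SD {snd q, fst q} = {}"
      proof (intro ballI impI)
        fix p q assume p: "p \<in> P7" and q: "q \<in> P7" and pq: "p \<noteq> q"
        have "{snd p, fst p} \<noteq> {snd q, fst q}"
        proof
          assume "{snd p, fst p} = {snd q, fst q}"
          then have "(snd p = snd q \<and> fst p = fst q) \<or> (snd p = fst q \<and> fst p = snd q)"
            by (simp add: doubleton_eq_iff)
          then show False using p q pq by (cases p, cases q) (auto simp: P7_def)
        qed
        then show "SD {snd p, fst p} \<inter> SD {snd q, fst q} = {}" by (auto simp: SD_def)
      qed
    qed
    then show ?thesis using UN by simp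
  qed
  show False
  proof (rule final_arith[of "\<lambda>i j. card (SD {i,j})"])
    show "card (SD {0,j}) = 0 \<or> card (SD {0,j}) = 2" if "1 \<le> j" "j < 7" for j
      using c02[of 0 j] that by auto
    show "card (SD {j,l}) = (if (card (SD {0,j}) = 0) = (card (SD {0,l}) = 0) then 0 else 2)"
      if "1 \<le> j" "j < l" "l < 7" for j l
      using trip[OF that] .
    show "(\<Sum>p\<in>P7. card (SD {snd p, fst p})) = 32" using sumS cardS by simp
  qed
qed

lemma p1: "5 \<le> k \<Longrightarrow> 2*(k+1) < (2::nat)^k"
  by (induction k rule: dec_induct) simp_all

lemma p2: "6 \<le> k \<Longrightarrow> (k+2)*(k+1) < (2::nat)^k"
proof (induction k rule: dec_induct)
  case base then show ?case by simp
next
  case (step k)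
  have "2*(k+1) < (2::nat)^k" using p1[of k] step by simp
  then show ?case using step by (simp add: algebra_simps)
qed

theorem proposition17:
  fixes n k :: nat
  assumes "k \<ge> 5" and "k < n" and "n \<le> k + 2"
  shows "\<not> (\<exists>S. antipodal_splitting n k S)"
proof
  assume "\<exists>S. antipodal_splitting n k S"
  then obtain S where spl: "antipodal_splitting n k S" by blast
  have cS: "card S = 2 ^ k" using spl by (simp add: antipodal_splitting_def)
  have bound: "2 ^ k \<le> 2 * (n choose (n - k))" using count_bound[OF spl] cS by simp
  have "n = k + 1 \<or> n = k + 2" using assms by linarith
  then show False
  proof
    assume n: "n = k + 1"
    then have "2 ^ k \<le> 2 * (k + 1)" using bound by simp
    then show False using p1[OF assms(1)] by simp
  next
    assume n: "n = k + 2"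
    show False
    proof (cases "k = 5")
      case True
      then show False using case75 spl n by simp
    next
      case False
      then have k6: "6 \<le> k" using assms(1) by simp
      have "2 * ((k+2) choose 2) \<le> (k+2)*(k+1)" by (simp add: choose_two)
      then have "2 ^ k \<le> (k+2)*(k+1)" using bound n by simp
      then show False using p2[OF k6] by simp
    qed
  qed
qed

end
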